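(* Let $\zeta_5=e^{2\pi i/5}$, let $A=\theta[1;\tfrac15]$ and $B=\theta[1;\tfrac35]$ (theta constants, functions of $\tau$), and for $k\in\{1,3,5,7,9\}$ let $f_k=\theta[\tfrac15;\tfrac k5](\zeta,\tau)$. Then for every $(\zeta,\tau)\in\mathbb{C}\times\mathbb{H}^2$: $$B^2f_1f_9-A^2f_3f_7+ABf_5^2=0,$$ $$\zeta_5^2A^2f_3f_9-\zeta_5^2B^2f_5f_7+ABf_1^2=0,$$ $$B^2f_1f_3+\zeta_5^2A^2f_5f_9-\zeta_5^2ABf_7^2=0,$$ $$A^2f_1f_5+\zeta_5^2B^2f_7f_9-ABf_3^2=0,$$ $$A^2f_1f_7-B^2f_3f_5+\zeta_5^2ABf_9^2=0.$$
   Context: Let $\mathbb{H}^2=\{\tau\in\mathbb{C}:\Im\tau>0\}$. For $(\epsilon,\epsilon')\in\mathbb{R}^2$, $$\theta[\epsilon;\epsilon'](\zeta,\tau)=\sum_{n\in\mathbb{Z}}\exp\Big(2\pi i\Big[\tfrac12\big(n+\tfrac{\epsilon}{2}\big)^2\tau+\big(n+\tfrac{\epsilon}{2}\big)\big(\zeta+\tfrac{\epsilon'}{2}\big)\Big]\Big),$$ and $\theta[\epsilon;\epsilon']=\theta[\epsilon;\epsilon'](0,\tau)$ denotes the theta constant. *)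

theory Defs
  imports "HOL-Analysis.Analysis"
begin

definition theta_char :: "real \<Rightarrow> real \<Rightarrow> complex \<Rightarrow> complex \<Rightarrow> complex" where
  "theta_char e e' z t = (\<Sum>\<^sub>\<infinity>n::int.
     exp (2 * pi * \<i> * ((1/2) * (of_int n + of_real e / 2)^2 * t
                        + (of_int n + of_real e / 2) * (z + of_real e' / 2))))"

definition theta_const :: "real \<Rightarrow> real \<Rightarrow> complex \<Rightarrow> complex" where
  "theta_const e e' t = theta_char e e' 0 t"

end

theory Submission imports Defs begin


lemma geom_int_summable:
  fixes x :: real
  assumes "0 \<le> x" "x < 1"
  shows "(\<lambda>n::int. x ^ nat \<bar>n\<bar>) summable_on UNIV"
proof -
  have g: "(\<lambda>k::nat. x ^ k) summable_on UNIV"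
    using assms by (subst summable_on_UNIV_nonneg_real_iff) (auto intro: summable_geometric)
  have A: "(\<lambda>n::int. x ^ nat \<bar>n\<bar>) summable_on range int"
    using g by (subst summable_on_reindex) (auto simp: o_def)
  have g2: "(\<lambda>k::nat. x ^ Suc k) summable_on UNIV"
    using g summable_on_cmult_left[OF g, of x] by (simp add: mult.commute)
  have B: "(\<lambda>n::int. x ^ nat \<bar>n\<bar>) summable_on range (\<lambda>k::nat. - int k - 1)"
  proof (subst summable_on_reindex)
    show "inj_on (\<lambda>k::nat. - int k - 1) UNIV" by (auto simp: inj_on_def)
    have "((\<lambda>n::int. x ^ nat \<bar>n\<bar>) \<circ> (\<lambda>k::nat. - int k - 1)) = (\<lambda>k. x ^ Suc k)"
      by (auto simp: o_def nat_add_distrib)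
    then show "((\<lambda>n::int. x ^ nat \<bar>n\<bar>) \<circ> (\<lambda>k::nat. - int k - 1)) summable_on UNIV"
      using g2 by simp
  qed
  have U: "UNIV = range int \<union> range (\<lambda>k::nat. - int k - 1)"
  proof -
    { fix n :: int
      have "n \<in> range int \<union> range (\<lambda>k::nat. - int k - 1)"
      proof (cases "n \<ge> 0")
        case True then show ?thesis by (auto intro: image_eqI[of _ _ "nat n"])
      next
        case False then show ?thesis by (auto intro!: image_eqI[of _ _ "nat (-n-1)"])
      qed }
    then show ?thesis by auto
  qed
  show ?thesis
    by (subst U, rule summable_on_union[OF A B])
qed



definition S :: "real \<Rightarrow> complex \<Rightarrow> complex \<Rightarrow> complex" where
  "S c t w = (\<Sum>\<^sub>\<infinity>n::int. exp (2 * pi * \<i> * ((of_int n + of_real c)^2 * t / 2 + (of_int n + of_real c) * w)))"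

lemma quad_bound:
  fixes a b u :: real
  assumes "a > 0"
  shows "a * u^2 + b * u \<ge> \<bar>u\<bar> - (\<bar>b\<bar> + 1)^2 / (4 * a)"
proof -
  define B where "B = \<bar>b\<bar> + 1"
  define y where "y = \<bar>u\<bar>"
  have uv: "u^2 = y^2" unfolding y_def by simp
  have "0 \<le> (2 * a * y - B)^2" by simp
  also have "(2 * a * y - B)^2 = 4*a*(a*y^2 - B*y) + B^2"
    by (simp add: power2_eq_square algebra_simps)
  finally have h: "0 \<le> 4*a*(a*y^2 - B*y) + B^2" .
  have "a*y^2 - B*y + B^2/(4*a) = (4*a*(a*y^2 - B*y) + B^2) / (4*a)"
    using assms by (simp add: field_simps)
  also have "\<dots> \<ge> 0" using h assms by simp
  finally have h2: "a*y^2 - B*y + B^2/(4*a) \<ge> 0" .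
  have "\<bar>b * u\<bar> = \<bar>b\<bar> * y" unfolding y_def by (simp add: abs_mult)
  hence "b * u \<ge> - \<bar>b\<bar> * y" by linarith
  moreover have "B * y = \<bar>b\<bar> * y + y" unfolding B_def by (simp add: algebra_simps)
  moreover have "a * u^2 = a * y^2" using uv by simp
  ultimately show ?thesis using h2 unfolding B_def[symmetric] y_def[symmetric] by linarith
qed

lemma norm_term:
  fixes c :: real
  shows "norm (exp (2 * pi * \<i> * ((of_int n + of_real c)^2 * t / 2 + (of_int n + of_real c) * w)))
     = exp (- (pi * Im t) * (n + c)^2 - (2*pi*Im w) * (n + c))"
proof -
  define u where "u = real_of_int n + c"
  have u: "(of_int n + of_real c :: complex) = of_real u" by (simp add: u_def)
  have "Im ((of_real u)^2 * t / 2 + of_real u * w) = u^2 * Im t / 2 + u * Im w"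
    by (simp flip: of_real_power)
  moreover have "Re (2 * pi * \<i> * X) = - 2 * pi * Im X" for X :: complex by simp
  ultimately have "Re (2 * pi * \<i> * ((of_int n + of_real c)^2 * t / 2 + (of_int n + of_real c) * w))
        = - (pi * Im t) * u^2 - (2*pi*Im w) * u"
    unfolding u by (simp add: algebra_simps)
  then show ?thesis by (simp add: norm_exp_eq_Re u_def)
qed

lemma S_abs_summable:
  assumes "Im t > 0"
  shows "(\<lambda>n::int. norm (exp (2 * pi * \<i> * ((of_int n + of_real c)^2 * t / 2 + (of_int n + of_real c) * w))))
           summable_on UNIV"
proof (rule Infinite_Sum.abs_summable_on_comparison_test)
  define a where "a = pi * Im t"
  define b where "b = 2*pi*Im w"
  define K where "K = (\<bar>b\<bar> + 1)^2 / (4 * a) + \<bar>c\<bar>"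
  have a: "a > 0" using assms by (simp add: a_def)
  have gs: "(\<lambda>n::int. (exp (-1) :: real) ^ nat \<bar>n\<bar>) summable_on UNIV"
    by (rule geom_int_summable) auto
  show "(\<lambda>n::int. norm (exp K * exp (-1) ^ nat \<bar>n\<bar>)) summable_on UNIV"
    using summable_on_cmult_right[OF gs, of "exp K"] by simp
  fix n :: int
  have q: "a * (n+c)^2 + b * (n+c) \<ge> \<bar>n+c\<bar> - (\<bar>b\<bar> + 1)^2 / (4 * a)"
    by (rule quad_bound[OF a])
  have "\<bar>n+c\<bar> \<ge> \<bar>n\<bar> - \<bar>c\<bar>" by linarith
  hence le: "- a * (n+c)^2 - b * (n+c) \<le> K - \<bar>n\<bar>" using q unfolding K_def by linarith
  have e: "exp (-1) ^ nat \<bar>n\<bar> = exp (- real_of_int \<bar>n\<bar>)"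
    by (simp add: exp_of_nat_mult[symmetric])
  show "norm (exp (2 * pi * \<i> * ((of_int n + of_real c)^2 * t / 2 + (of_int n + of_real c) * w)))
        \<le> norm (exp K * exp (-1) ^ nat \<bar>n\<bar>)"
    unfolding norm_term e using le
    by (simp add: a_def b_def exp_add[symmetric] del: exp_of_nat_mult)
qed



lemma infsum_mult_infsum:
  fixes f g :: "'a \<Rightarrow> complex"
  assumes f: "(\<lambda>n. norm (f n)) summable_on UNIV" and g: "(\<lambda>m. norm (g m)) summable_on UNIV"
  shows "(\<lambda>(n,m). norm (f n * g m)) summable_on UNIV"
    and "infsum f UNIV * infsum g UNIV = infsum (\<lambda>(n,m). f n * g m) UNIV"
proof -
  have row: "(\<lambda>y. norm (f x * g y)) summable_on UNIV" for x
    using summable_on_cmult_right[OF g, of "norm (f x)"] by (simp add: norm_mult)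
  have rs: "(\<lambda>x. infsum (\<lambda>y. norm (f x * g y)) UNIV) = (\<lambda>x. norm (f x) * infsum (\<lambda>y. norm (g y)) UNIV)"
    by (simp add: norm_mult infsum_cmult_right')
  have "(\<lambda>x. norm (infsum (\<lambda>y. norm (f x * g y)) UNIV)) summable_on UNIV"
    unfolding rs using summable_on_cmult_left[OF f, of "infsum (\<lambda>y. norm (g y)) UNIV"]
    by (simp add: norm_mult infsum_nonneg infsum_cmult_right')
  hence "(\<lambda>p. norm (f (fst p) * g (snd p))) summable_on Sigma UNIV (\<lambda>_. UNIV)"
    using row Infinite_Sum.abs_summable_on_Sigma_iff[of "\<lambda>p. f (fst p) * g (snd p)" UNIV "\<lambda>_. UNIV"] by auto
  thus S: "(\<lambda>(n,m). norm (f n * g m)) summable_on UNIV"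
    by (simp add: case_prod_unfold)
  have S2: "(\<lambda>(n,m). f n * g m) summable_on Sigma UNIV (\<lambda>_. UNIV)"
    using abs_summable_summable[of "\<lambda>(n,m). f n * g m"] S by (simp add: case_prod_unfold)
  have "infsum (\<lambda>(n,m). f n * g m) UNIV = infsum (\<lambda>n. infsum (\<lambda>m. f n * g m) UNIV) UNIV"
    using infsum_Sigma'_banach[OF S2] by simp
  also have "\<dots> = infsum (\<lambda>n. f n * infsum g UNIV) UNIV"
    by (simp add: infsum_cmult_right')
  also have "\<dots> = infsum f UNIV * infsum g UNIV"
    by (simp add: infsum_cmult_left')
  finally show "infsum f UNIV * infsum g UNIV = infsum (\<lambda>(n,m). f n * g m) UNIV" by simp
qed


definition tm :: "real \<Rightarrow> complex \<Rightarrow> complex \<Rightarrow> int \<Rightarrow> complex" where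
  "tm c t w n = exp (2 * pi * \<i> * ((of_int n + of_real c)^2 * t / 2 + (of_int n + of_real c) * w))"

lemma S_tm: "S c t w = infsum (tm c t w) UNIV"
  unfolding S_def tm_def by simp

lemma tm_summable: "Im t > 0 \<Longrightarrow> (\<lambda>n. norm (tm c t w n)) summable_on UNIV"
  unfolding tm_def by (rule S_abs_summable)

lemma tm_key:
  fixes p k l :: int and c1 c2 :: real
  shows "tm c1 t x (k+l+p) * tm c2 t y (k-l) =
         tm ((of_int p+c1+c2)/2) (2*t) (x+y) k * tm ((of_int p+c1-c2)/2) (2*t) (x-y) l"
  unfolding tm_def
  apply (simp only: exp_add[symmetric])
  apply (rule arg_cong[where f=exp])
  apply (simp add: power2_eq_square field_simps)
  done


lemma reindex_parity:
  fixes F :: "int \<times> int \<Rightarrow> complex" and p :: int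
  assumes p: "p \<in> {0,1}"
  shows "infsum (\<lambda>(k,l). F (k+l+p, k-l)) UNIV = infsum F {(n,m). (n+m) mod 2 = p}"
proof (rule infsum_reindex_bij_witness[where j="\<lambda>(k,l). (k+l+p, k-l)"
          and i="\<lambda>(n,m). ((n+m-p) div 2, (n-m-p) div 2)"])
  fix a :: "int \<times> int"
  obtain k l where a: "a = (k,l)" by fastforce
  show "(\<lambda>(n,m). ((n+m-p) div 2, (n-m-p) div 2)) ((\<lambda>(k,l). (k+l+p, k-l)) a) = a"
    using a by simp
  show "(\<lambda>(k,l). (k+l+p, k-l)) a \<in> {(n,m). (n+m) mod 2 = p}"
    using a p by auto
next
  fix b :: "int \<times> int"
  assume b: "b \<in> {(n,m). (n+m) mod 2 = p}"
  obtain n m where bb: "b = (n,m)" by fastforce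
  have "(n+m) mod 2 = p" using b bb by simp
  then show "(\<lambda>(k,l). (k+l+p, k-l)) ((\<lambda>(n,m). ((n+m-p) div 2, (n-m-p) div 2)) b) = b"
    using bb by simp presburger
  show "(\<lambda>(n,m). ((n+m-p) div 2, (n-m-p) div 2)) b \<in> UNIV" by simp
next
  fix a :: "int \<times> int"
  obtain k l where a: "a = (k,l)" by fastforce
  show "F ((\<lambda>(k,l). (k+l+p, k-l)) a) = (\<lambda>(k, l). F (k + l + p, k - l)) a" using a by simp
qed

lemma S_prod:
  assumes t: "Im t > 0"
  shows "S c1 t x * S c2 t y =
     S ((0+c1+c2)/2) (2*t) (x+y) * S ((0+c1-c2)/2) (2*t) (x-y) +
     S ((1+c1+c2)/2) (2*t) (x+y) * S ((1+c1-c2)/2) (2*t) (x-y)"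
proof -
  have t2: "Im (2*t) > 0" using t by simp
  define F where "F = (\<lambda>(n,m). tm c1 t x n * tm c2 t y m)"
  have FS: "(\<lambda>q. norm (F q)) summable_on UNIV"
    using infsum_mult_infsum(1)[OF tm_summable[OF t] tm_summable[OF t]] by (simp add: F_def case_prod_unfold)
  hence FS': "F summable_on A" for A
    using abs_summable_summable summable_on_subset_banach by blast
  have L: "S c1 t x * S c2 t y = infsum F UNIV"
    unfolding S_tm F_def by (rule infsum_mult_infsum(2)[OF tm_summable[OF t] tm_summable[OF t]])
  have R: "S ((of_int p+c1+c2)/2) (2*t) (x+y) * S ((of_int p+c1-c2)/2) (2*t) (x-y)
        = infsum F {(n,m). (n+m) mod 2 = p}" if p: "p \<in> {0,1}" for p :: int
  proof -
    have "S ((of_int p+c1+c2)/2) (2*t) (x+y) * S ((of_int p+c1-c2)/2) (2*t) (x-y)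
      = infsum (\<lambda>(k,l). tm ((of_int p+c1+c2)/2) (2*t) (x+y) k * tm ((of_int p+c1-c2)/2) (2*t) (x-y) l) UNIV"
      unfolding S_tm by (rule infsum_mult_infsum(2)[OF tm_summable[OF t2] tm_summable[OF t2]])
    also have "\<dots> = infsum (\<lambda>(k,l). F (k+l+p, k-l)) UNIV"
      by (simp add: F_def tm_key)
    also have "\<dots> = infsum F {(n,m). (n+m) mod 2 = p}"
      by (rule reindex_parity[OF p])
    finally show ?thesis .
  qed
  have U: "(UNIV :: (int\<times>int) set) = {(n,m). (n+m) mod 2 = 0} \<union> {(n,m). (n+m) mod 2 = 1}"
    by auto
  have "infsum F UNIV = infsum F {(n,m). (n+m) mod 2 = 0} + infsum F {(n,m). (n+m) mod 2 = 1}"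
    by (subst U, rule infsum_Un_disjoint[OF FS' FS']) auto
  then show ?thesis using L R[of 0] R[of 1] by simp
qed


lemma exp_int: "exp (2 * pi * \<i> * of_int l) = 1"
  using exp_integer_2pi[of "of_int l"] by (simp add: mult_ac)

lemma S_shift_c: "S (c + of_int k) t w = S c t w"
  unfolding S_tm
proof (rule infsum_reindex_bij_witness[where j="\<lambda>n. n + k" and i="\<lambda>n. n - k"])
  fix n :: int
  show "tm c t w (n + k) = tm (c + of_int k) t w n" unfolding tm_def
    by (simp add: algebra_simps)
qed auto

lemma S_shift_w: "S c t (w + of_int m) = exp (2 * pi * \<i> * (of_real c * of_int m)) * S c t w"
  unfolding S_tm
proof -
  have "tm c t (w + of_int m) n = exp (2 * pi * \<i> * (of_real c * of_int m)) * tm c t w n" for n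
  proof -
    have "tm c t (w + of_int m) n = tm c t w n * exp (2 * pi * \<i> * of_int (n*m)) * exp (2 * pi * \<i> * (of_real c * of_int m))"
      unfolding tm_def by (simp only: exp_add[symmetric]) (rule arg_cong[where f=exp], simp add: algebra_simps)
    then show ?thesis by (simp only: exp_int) simp
  qed
  then have "tm c t (w + of_int m) = (\<lambda>n. exp (2 * pi * \<i> * (of_real c * of_int m)) * tm c t w n)"
    by (rule ext)
  then show "infsum (tm c t (w + of_int m)) UNIV = exp (2 * pi * \<i> * (of_real c * of_int m)) * infsum (tm c t w) UNIV"
    by (simp add: infsum_cmult_right')
qed

lemma S_neg: "S c t w = S (-c) t (-w)"
  unfolding S_tm
proof (rule infsum_reindex_bij_witness[where j="\<lambda>n. - n" and i="\<lambda>n. - n"])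
  fix n :: int
  show "tm (-c) t (-w) (- n) = tm c t w n" unfolding tm_def
    by (rule arg_cong[where f=exp]) (simp add: algebra_simps power2_eq_square)
qed auto

definition zeta :: complex where "zeta = exp (2 * pi * \<i> / 10)"

lemma S_canon:
  fixes c c' :: real and k m l :: int and j :: nat
  assumes "c = c' + of_int k" "w = w' + of_int m" "10 * c * of_int m = of_nat j + 10 * of_int l"
  shows "S c t w = zeta ^ j * S c' t w'"
proof -
  have e: "exp (2 * pi * \<i> * (of_real c * of_int m)) = zeta ^ j"
  proof -
    have "2 * pi * \<i> * (of_real c * of_int m) = of_nat j * (2 * pi * \<i> / 10) + 2 * pi * \<i> * of_int l"
    proof -
      have "c * m = j / 10 + l" using assms(3) by (simp add: field_simps)
      hence "(of_real (c * m) :: complex) = of_real (j/10 + l)" by simp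
      hence "(of_real c * of_int m :: complex) = of_nat j / 10 + of_int l" by simp
      thus ?thesis by (simp add: algebra_simps)
    qed
    hence "exp (2 * pi * \<i> * (of_real c * of_int m)) = exp (of_nat j * (2 * pi * \<i> / 10)) * exp (2 * pi * \<i> * of_int l)"
      by (simp only: exp_add)
    also have "\<dots> = zeta ^ j" by (simp only: exp_int exp_of_nat_mult zeta_def mult_1_right)
    finally show ?thesis .
  qed
  show ?thesis using assms(1,2) S_shift_w[of c t w' m] S_shift_c[of c' k t w'] e by simp
qed

lemma S_canon_neg:
  fixes c c' :: real and k m l :: int and j :: nat
  assumes "-c = c' + of_int k" "-w = w' + of_int m" "10 * (-c) * of_int m = of_nat j + 10 * of_int l"
  shows "S c t w = zeta ^ j * S c' t w'"
  using S_neg[of c t w] S_canon[OF assms] by simp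

lemma zeta5: "zeta ^ 5 = -1"
proof -
  have "zeta ^ 5 = exp (of_nat 5 * (2 * pi * \<i> / 10))" by (simp only: zeta_def exp_of_nat_mult)
  also have "\<dots> = exp (pi * \<i>)" by (rule arg_cong[where f=exp]) simp
  also have "\<dots> = -1" by simp
  finally show ?thesis .
qed

lemma theta_S: "theta_char e e' z t = S (e/2) t (z + of_real e' / 2)"
  unfolding theta_char_def S_def
  by (rule infsum_cong, rule arg_cong[where f=exp]) (simp add: field_simps)


lemma w_zeta: "exp (2 * pi * \<i> / 5) = zeta ^ 2"
proof -
  have "zeta ^ 2 = exp (of_nat 2 * (2 * pi * \<i> / 10))" by (simp only: zeta_def exp_of_nat_mult)
  also have "\<dots> = exp (2 * pi * \<i> / 5)" by (rule arg_cong[where f=exp]) simp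
  finally show ?thesis by simp
qed

lemma main_identities:
  fixes z t :: complex
  assumes ht: "Im t > 0"
  shows "((S (1/2) t (3/10))^2 * (S (1/10) t (z + 1/10)) * (S (1/10) t (z + 9/10)) - (S (1/2) t (1/10))^2 * (S (1/10) t (z + 3/10)) * (S (1/10) t (z + 7/10)) + (S (1/2) t (1/10)) * (S (1/2) t (3/10)) * ((S (1/10) t (z + 1/2)))^2 = 0) \<and>
    (zeta^4 * (S (1/2) t (1/10))^2 * (S (1/10) t (z + 3/10)) * (S (1/10) t (z + 9/10)) - zeta^4 * (S (1/2) t (3/10))^2 * (S (1/10) t (z + 1/2)) * (S (1/10) t (z + 7/10)) + (S (1/2) t (1/10)) * (S (1/2) t (3/10)) * ((S (1/10) t (z + 1/10)))^2 = 0) \<and>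
    ((S (1/2) t (3/10))^2 * (S (1/10) t (z + 1/10)) * (S (1/10) t (z + 3/10)) + zeta^4 * (S (1/2) t (1/10))^2 * (S (1/10) t (z + 1/2)) * (S (1/10) t (z + 9/10)) - zeta^4 * (S (1/2) t (1/10)) * (S (1/2) t (3/10)) * ((S (1/10) t (z + 7/10)))^2 = 0) \<and>
    ((S (1/2) t (1/10))^2 * (S (1/10) t (z + 1/10)) * (S (1/10) t (z + 1/2)) + zeta^4 * (S (1/2) t (3/10))^2 * (S (1/10) t (z + 7/10)) * (S (1/10) t (z + 9/10)) - (S (1/2) t (1/10)) * (S (1/2) t (3/10)) * ((S (1/10) t (z + 3/10)))^2 = 0) \<and>
    ((S (1/2) t (1/10))^2 * (S (1/10) t (z + 1/10)) * (S (1/10) t (z + 7/10)) - (S (1/2) t (3/10))^2 * (S (1/10) t (z + 3/10)) * (S (1/10) t (z + 1/2)) + zeta^4 * (S (1/2) t (1/10)) * (S (1/2) t (3/10)) * ((S (1/10) t (z + 9/10)))^2 = 0)"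
proof -
  have cn0: "S ((0+1/2+1/10)/2) (2*t) (3/10 + (z + 1/10)) = zeta ^ 0 * S (3/10) (2*t) (z + 2/5)"
    by (rule S_canon[where k="0" and m="0" and l="0"]) (simp_all add: field_simps)
  have cn1: "S ((0+1/2-1/10)/2) (2*t) (3/10 - (z + 1/10)) = zeta ^ 2 * S (4/5) (2*t) (z + 4/5)"
    by (rule S_canon_neg[where k="-1" and m="-1" and l="0"]) (simp_all add: field_simps)
  have cn2: "S ((1+1/2+1/10)/2) (2*t) (3/10 + (z + 1/10)) = zeta ^ 0 * S (4/5) (2*t) (z + 2/5)"
    by (rule S_canon[where k="0" and m="0" and l="0"]) (simp_all add: field_simps)
  have cn3: "S ((1+1/2-1/10)/2) (2*t) (3/10 - (z + 1/10)) = zeta ^ 7 * S (3/10) (2*t) (z + 4/5)"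
    by (rule S_canon_neg[where k="-1" and m="-1" and l="0"]) (simp_all add: field_simps)
  have pr0: "S (1/2) t (3/10) * S (1/10) t (z + 1/10) = zeta ^ 0 * S (3/10) (2*t) (z + 2/5) * (zeta ^ 2 * S (4/5) (2*t) (z + 4/5)) + zeta ^ 0 * S (4/5) (2*t) (z + 2/5) * (zeta ^ 7 * S (3/10) (2*t) (z + 4/5))"
    by (simp only: S_prod[OF ht] cn0 cn1 cn2 cn3)
  have cn4: "S ((0+1/2+1/10)/2) (2*t) (3/10 + (z + 9/10)) = zeta ^ 3 * S (3/10) (2*t) (z + 1/5)"
    by (rule S_canon[where k="0" and m="1" and l="0"]) (simp_all add: field_simps)
  have cn5: "S ((0+1/2-1/10)/2) (2*t) (3/10 - (z + 9/10)) = zeta ^ 0 * S (4/5) (2*t) (z + 3/5)"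
    by (rule S_canon_neg[where k="-1" and m="0" and l="0"]) (simp_all add: field_simps)
  have cn6: "S ((1+1/2+1/10)/2) (2*t) (3/10 + (z + 9/10)) = zeta ^ 8 * S (4/5) (2*t) (z + 1/5)"
    by (rule S_canon[where k="0" and m="1" and l="0"]) (simp_all add: field_simps)
  have cn7: "S ((1+1/2-1/10)/2) (2*t) (3/10 - (z + 9/10)) = zeta ^ 0 * S (3/10) (2*t) (z + 3/5)"
    by (rule S_canon_neg[where k="-1" and m="0" and l="0"]) (simp_all add: field_simps)
  have pr1: "S (1/2) t (3/10) * S (1/10) t (z + 9/10) = zeta ^ 3 * S (3/10) (2*t) (z + 1/5) * (zeta ^ 0 * S (4/5) (2*t) (z + 3/5)) + zeta ^ 8 * S (4/5) (2*t) (z + 1/5) * (zeta ^ 0 * S (3/10) (2*t) (z + 3/5))"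
    by (simp only: S_prod[OF ht] cn4 cn5 cn6 cn7)
  have cn8: "S ((0+1/2+1/10)/2) (2*t) (1/10 + (z + 3/10)) = zeta ^ 0 * S (3/10) (2*t) (z + 2/5)"
    by (rule S_canon[where k="0" and m="0" and l="0"]) (simp_all add: field_simps)
  have cn9: "S ((0+1/2-1/10)/2) (2*t) (1/10 - (z + 3/10)) = zeta ^ 0 * S (4/5) (2*t) (z + 1/5)"
    by (rule S_canon_neg[where k="-1" and m="0" and l="0"]) (simp_all add: field_simps)
  have cn10: "S ((1+1/2+1/10)/2) (2*t) (1/10 + (z + 3/10)) = zeta ^ 0 * S (4/5) (2*t) (z + 2/5)"
    by (rule S_canon[where k="0" and m="0" and l="0"]) (simp_all add: field_simps)
  have cn11: "S ((1+1/2-1/10)/2) (2*t) (1/10 - (z + 3/10)) = zeta ^ 0 * S (3/10) (2*t) (z + 1/5)"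
    by (rule S_canon_neg[where k="-1" and m="0" and l="0"]) (simp_all add: field_simps)
  have pr2: "S (1/2) t (1/10) * S (1/10) t (z + 3/10) = zeta ^ 0 * S (3/10) (2*t) (z + 2/5) * (zeta ^ 0 * S (4/5) (2*t) (z + 1/5)) + zeta ^ 0 * S (4/5) (2*t) (z + 2/5) * (zeta ^ 0 * S (3/10) (2*t) (z + 1/5))"
    by (simp only: S_prod[OF ht] cn8 cn9 cn10 cn11)
  have cn12: "S ((0+1/2+1/10)/2) (2*t) (1/10 + (z + 7/10)) = zeta ^ 0 * S (3/10) (2*t) (z + 4/5)"
    by (rule S_canon[where k="0" and m="0" and l="0"]) (simp_all add: field_simps)
  have cn13: "S ((0+1/2-1/10)/2) (2*t) (1/10 - (z + 7/10)) = zeta ^ 0 * S (4/5) (2*t) (z + 3/5)"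
    by (rule S_canon_neg[where k="-1" and m="0" and l="0"]) (simp_all add: field_simps)
  have cn14: "S ((1+1/2+1/10)/2) (2*t) (1/10 + (z + 7/10)) = zeta ^ 0 * S (4/5) (2*t) (z + 4/5)"
    by (rule S_canon[where k="0" and m="0" and l="0"]) (simp_all add: field_simps)
  have cn15: "S ((1+1/2-1/10)/2) (2*t) (1/10 - (z + 7/10)) = zeta ^ 0 * S (3/10) (2*t) (z + 3/5)"
    by (rule S_canon_neg[where k="-1" and m="0" and l="0"]) (simp_all add: field_simps)
  have pr3: "S (1/2) t (1/10) * S (1/10) t (z + 7/10) = zeta ^ 0 * S (3/10) (2*t) (z + 4/5) * (zeta ^ 0 * S (4/5) (2*t) (z + 3/5)) + zeta ^ 0 * S (4/5) (2*t) (z + 4/5) * (zeta ^ 0 * S (3/10) (2*t) (z + 3/5))"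
    by (simp only: S_prod[OF ht] cn12 cn13 cn14 cn15)
  have cn16: "S ((0+1/2+1/10)/2) (2*t) (1/10 + (z + 1/2)) = zeta ^ 0 * S (3/10) (2*t) (z + 3/5)"
    by (rule S_canon[where k="0" and m="0" and l="0"]) (simp_all add: field_simps)
  have cn17: "S ((0+1/2-1/10)/2) (2*t) (1/10 - (z + 1/2)) = zeta ^ 0 * S (4/5) (2*t) (z + 2/5)"
    by (rule S_canon_neg[where k="-1" and m="0" and l="0"]) (simp_all add: field_simps)
  have cn18: "S ((1+1/2+1/10)/2) (2*t) (1/10 + (z + 1/2)) = zeta ^ 0 * S (4/5) (2*t) (z + 3/5)"
    by (rule S_canon[where k="0" and m="0" and l="0"]) (simp_all add: field_simps)
  have cn19: "S ((1+1/2-1/10)/2) (2*t) (1/10 - (z + 1/2)) = zeta ^ 0 * S (3/10) (2*t) (z + 2/5)"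
    by (rule S_canon_neg[where k="-1" and m="0" and l="0"]) (simp_all add: field_simps)
  have pr4: "S (1/2) t (1/10) * S (1/10) t (z + 1/2) = zeta ^ 0 * S (3/10) (2*t) (z + 3/5) * (zeta ^ 0 * S (4/5) (2*t) (z + 2/5)) + zeta ^ 0 * S (4/5) (2*t) (z + 3/5) * (zeta ^ 0 * S (3/10) (2*t) (z + 2/5))"
    by (simp only: S_prod[OF ht] cn16 cn17 cn18 cn19)
  have cn20: "S ((0+1/2+1/10)/2) (2*t) (3/10 + (z + 1/2)) = zeta ^ 0 * S (3/10) (2*t) (z + 4/5)"
    by (rule S_canon[where k="0" and m="0" and l="0"]) (simp_all add: field_simps)
  have cn21: "S ((0+1/2-1/10)/2) (2*t) (3/10 - (z + 1/2)) = zeta ^ 0 * S (4/5) (2*t) (z + 1/5)"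
    by (rule S_canon_neg[where k="-1" and m="0" and l="0"]) (simp_all add: field_simps)
  have cn22: "S ((1+1/2+1/10)/2) (2*t) (3/10 + (z + 1/2)) = zeta ^ 0 * S (4/5) (2*t) (z + 4/5)"
    by (rule S_canon[where k="0" and m="0" and l="0"]) (simp_all add: field_simps)
  have cn23: "S ((1+1/2-1/10)/2) (2*t) (3/10 - (z + 1/2)) = zeta ^ 0 * S (3/10) (2*t) (z + 1/5)"
    by (rule S_canon_neg[where k="-1" and m="0" and l="0"]) (simp_all add: field_simps)
  have pr5: "S (1/2) t (3/10) * S (1/10) t (z + 1/2) = zeta ^ 0 * S (3/10) (2*t) (z + 4/5) * (zeta ^ 0 * S (4/5) (2*t) (z + 1/5)) + zeta ^ 0 * S (4/5) (2*t) (z + 4/5) * (zeta ^ 0 * S (3/10) (2*t) (z + 1/5))"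
    by (simp only: S_prod[OF ht] cn20 cn21 cn22 cn23)
  have cn24: "S ((0+1/2+1/10)/2) (2*t) (1/10 + (z + 9/10)) = zeta ^ 3 * S (3/10) (2*t) (z)"
    by (rule S_canon[where k="0" and m="1" and l="0"]) (simp_all add: field_simps)
  have cn25: "S ((0+1/2-1/10)/2) (2*t) (1/10 - (z + 9/10)) = zeta ^ 0 * S (4/5) (2*t) (z + 4/5)"
    by (rule S_canon_neg[where k="-1" and m="0" and l="0"]) (simp_all add: field_simps)
  have cn26: "S ((1+1/2+1/10)/2) (2*t) (1/10 + (z + 9/10)) = zeta ^ 8 * S (4/5) (2*t) (z)"
    by (rule S_canon[where k="0" and m="1" and l="0"]) (simp_all add: field_simps)
  have cn27: "S ((1+1/2-1/10)/2) (2*t) (1/10 - (z + 9/10)) = zeta ^ 0 * S (3/10) (2*t) (z + 4/5)"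
    by (rule S_canon_neg[where k="-1" and m="0" and l="0"]) (simp_all add: field_simps)
  have pr6: "S (1/2) t (1/10) * S (1/10) t (z + 9/10) = zeta ^ 3 * S (3/10) (2*t) (z) * (zeta ^ 0 * S (4/5) (2*t) (z + 4/5)) + zeta ^ 8 * S (4/5) (2*t) (z) * (zeta ^ 0 * S (3/10) (2*t) (z + 4/5))"
    by (simp only: S_prod[OF ht] cn24 cn25 cn26 cn27)
  have cn28: "S ((0+1/2+1/10)/2) (2*t) (3/10 + (z + 7/10)) = zeta ^ 3 * S (3/10) (2*t) (z)"
    by (rule S_canon[where k="0" and m="1" and l="0"]) (simp_all add: field_simps)
  have cn29: "S ((0+1/2-1/10)/2) (2*t) (3/10 - (z + 7/10)) = zeta ^ 0 * S (4/5) (2*t) (z + 2/5)"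
    by (rule S_canon_neg[where k="-1" and m="0" and l="0"]) (simp_all add: field_simps)
  have cn30: "S ((1+1/2+1/10)/2) (2*t) (3/10 + (z + 7/10)) = zeta ^ 8 * S (4/5) (2*t) (z)"
    by (rule S_canon[where k="0" and m="1" and l="0"]) (simp_all add: field_simps)
  have cn31: "S ((1+1/2-1/10)/2) (2*t) (3/10 - (z + 7/10)) = zeta ^ 0 * S (3/10) (2*t) (z + 2/5)"
    by (rule S_canon_neg[where k="-1" and m="0" and l="0"]) (simp_all add: field_simps)
  have pr7: "S (1/2) t (3/10) * S (1/10) t (z + 7/10) = zeta ^ 3 * S (3/10) (2*t) (z) * (zeta ^ 0 * S (4/5) (2*t) (z + 2/5)) + zeta ^ 8 * S (4/5) (2*t) (z) * (zeta ^ 0 * S (3/10) (2*t) (z + 2/5))"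
    by (simp only: S_prod[OF ht] cn28 cn29 cn30 cn31)
  have cn32: "S ((0+1/2+1/10)/2) (2*t) (1/10 + (z + 1/10)) = zeta ^ 0 * S (3/10) (2*t) (z + 1/5)"
    by (rule S_canon[where k="0" and m="0" and l="0"]) (simp_all add: field_simps)
  have cn33: "S ((0+1/2-1/10)/2) (2*t) (1/10 - (z + 1/10)) = zeta ^ 0 * S (4/5) (2*t) (z)"
    by (rule S_canon_neg[where k="-1" and m="0" and l="0"]) (simp_all add: field_simps)
  have cn34: "S ((1+1/2+1/10)/2) (2*t) (1/10 + (z + 1/10)) = zeta ^ 0 * S (4/5) (2*t) (z + 1/5)"
    by (rule S_canon[where k="0" and m="0" and l="0"]) (simp_all add: field_simps)
  have cn35: "S ((1+1/2-1/10)/2) (2*t) (1/10 - (z + 1/10)) = zeta ^ 0 * S (3/10) (2*t) (z)"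
    by (rule S_canon_neg[where k="-1" and m="0" and l="0"]) (simp_all add: field_simps)
  have pr8: "S (1/2) t (1/10) * S (1/10) t (z + 1/10) = zeta ^ 0 * S (3/10) (2*t) (z + 1/5) * (zeta ^ 0 * S (4/5) (2*t) (z)) + zeta ^ 0 * S (4/5) (2*t) (z + 1/5) * (zeta ^ 0 * S (3/10) (2*t) (z))"
    by (simp only: S_prod[OF ht] cn32 cn33 cn34 cn35)
  have cn36: "S ((0+1/2+1/10)/2) (2*t) (3/10 + (z + 3/10)) = zeta ^ 0 * S (3/10) (2*t) (z + 3/5)"
    by (rule S_canon[where k="0" and m="0" and l="0"]) (simp_all add: field_simps)
  have cn37: "S ((0+1/2-1/10)/2) (2*t) (3/10 - (z + 3/10)) = zeta ^ 0 * S (4/5) (2*t) (z)"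
    by (rule S_canon_neg[where k="-1" and m="0" and l="0"]) (simp_all add: field_simps)
  have cn38: "S ((1+1/2+1/10)/2) (2*t) (3/10 + (z + 3/10)) = zeta ^ 0 * S (4/5) (2*t) (z + 3/5)"
    by (rule S_canon[where k="0" and m="0" and l="0"]) (simp_all add: field_simps)
  have cn39: "S ((1+1/2-1/10)/2) (2*t) (3/10 - (z + 3/10)) = zeta ^ 0 * S (3/10) (2*t) (z)"
    by (rule S_canon_neg[where k="-1" and m="0" and l="0"]) (simp_all add: field_simps)
  have pr9: "S (1/2) t (3/10) * S (1/10) t (z + 3/10) = zeta ^ 0 * S (3/10) (2*t) (z + 3/5) * (zeta ^ 0 * S (4/5) (2*t) (z)) + zeta ^ 0 * S (4/5) (2*t) (z + 3/5) * (zeta ^ 0 * S (3/10) (2*t) (z))"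
    by (simp only: S_prod[OF ht] cn36 cn37 cn38 cn39)

  have I1: "(S (1/2) t (3/10))^2 * (S (1/10) t (z + 1/10)) * (S (1/10) t (z + 9/10)) - (S (1/2) t (1/10))^2 * (S (1/10) t (z + 3/10)) * (S (1/10) t (z + 7/10)) + (S (1/2) t (1/10)) * (S (1/2) t (3/10)) * ((S (1/10) t (z + 1/2)))^2 = 0"
  proof -
    have "(S (1/2) t (3/10))^2 * (S (1/10) t (z + 1/10)) * (S (1/10) t (z + 9/10)) - (S (1/2) t (1/10))^2 * (S (1/10) t (z + 3/10)) * (S (1/10) t (z + 7/10)) + (S (1/2) t (1/10)) * (S (1/2) t (3/10)) * ((S (1/10) t (z + 1/2)))^2 = (S (1/2) t (3/10) * S (1/10) t (z + 1/10)) * (S (1/2) t (3/10) * S (1/10) t (z + 9/10)) - (S (1/2) t (1/10) * S (1/10) t (z + 3/10)) * (S (1/2) t (1/10) * S (1/10) t (z + 7/10)) + (S (1/2) t (1/10) * S (1/10) t (z + 1/2)) * (S (1/2) t (3/10) * S (1/10) t (z + 1/2))" by algebra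
    also have "\<dots> = 0" unfolding pr0 pr1 pr2 pr3 pr4 pr5 using zeta5 by algebra
    finally show ?thesis .
  qed
  have I2: "zeta^4 * (S (1/2) t (1/10))^2 * (S (1/10) t (z + 3/10)) * (S (1/10) t (z + 9/10)) - zeta^4 * (S (1/2) t (3/10))^2 * (S (1/10) t (z + 1/2)) * (S (1/10) t (z + 7/10)) + (S (1/2) t (1/10)) * (S (1/2) t (3/10)) * ((S (1/10) t (z + 1/10)))^2 = 0"
  proof -
    have "zeta^4 * (S (1/2) t (1/10))^2 * (S (1/10) t (z + 3/10)) * (S (1/10) t (z + 9/10)) - zeta^4 * (S (1/2) t (3/10))^2 * (S (1/10) t (z + 1/2)) * (S (1/10) t (z + 7/10)) + (S (1/2) t (1/10)) * (S (1/2) t (3/10)) * ((S (1/10) t (z + 1/10)))^2 = zeta^4 * (S (1/2) t (1/10) * S (1/10) t (z + 3/10)) * (S (1/2) t (1/10) * S (1/10) t (z + 9/10)) - zeta^4 * (S (1/2) t (3/10) * S (1/10) t (z + 1/2)) * (S (1/2) t (3/10) * S (1/10) t (z + 7/10)) + (S (1/2) t (1/10) * S (1/10) t (z + 1/10)) * (S (1/2) t (3/10) * S (1/10) t (z + 1/10))" by algebra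
    also have "\<dots> = 0" unfolding pr0 pr2 pr5 pr6 pr7 pr8 using zeta5 by algebra
    finally show ?thesis .
  qed
  have I3: "(S (1/2) t (3/10))^2 * (S (1/10) t (z + 1/10)) * (S (1/10) t (z + 3/10)) + zeta^4 * (S (1/2) t (1/10))^2 * (S (1/10) t (z + 1/2)) * (S (1/10) t (z + 9/10)) - zeta^4 * (S (1/2) t (1/10)) * (S (1/2) t (3/10)) * ((S (1/10) t (z + 7/10)))^2 = 0"
  proof -
    have "(S (1/2) t (3/10))^2 * (S (1/10) t (z + 1/10)) * (S (1/10) t (z + 3/10)) + zeta^4 * (S (1/2) t (1/10))^2 * (S (1/10) t (z + 1/2)) * (S (1/10) t (z + 9/10)) - zeta^4 * (S (1/2) t (1/10)) * (S (1/2) t (3/10)) * ((S (1/10) t (z + 7/10)))^2 = (S (1/2) t (3/10) * S (1/10) t (z + 1/10)) * (S (1/2) t (3/10) * S (1/10) t (z + 3/10)) + zeta^4 * (S (1/2) t (1/10) * S (1/10) t (z + 1/2)) * (S (1/2) t (1/10) * S (1/10) t (z + 9/10)) - zeta^4 * (S (1/2) t (1/10) * S (1/10) t (z + 7/10)) * (S (1/2) t (3/10) * S (1/10) t (z + 7/10))" by algebra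
    also have "\<dots> = 0" unfolding pr0 pr3 pr4 pr6 pr7 pr9 using zeta5 by algebra
    finally show ?thesis .
  qed
  have I4: "(S (1/2) t (1/10))^2 * (S (1/10) t (z + 1/10)) * (S (1/10) t (z + 1/2)) + zeta^4 * (S (1/2) t (3/10))^2 * (S (1/10) t (z + 7/10)) * (S (1/10) t (z + 9/10)) - (S (1/2) t (1/10)) * (S (1/2) t (3/10)) * ((S (1/10) t (z + 3/10)))^2 = 0"
  proof -
    have "(S (1/2) t (1/10))^2 * (S (1/10) t (z + 1/10)) * (S (1/10) t (z + 1/2)) + zeta^4 * (S (1/2) t (3/10))^2 * (S (1/10) t (z + 7/10)) * (S (1/10) t (z + 9/10)) - (S (1/2) t (1/10)) * (S (1/2) t (3/10)) * ((S (1/10) t (z + 3/10)))^2 = (S (1/2) t (1/10) * S (1/10) t (z + 1/10)) * (S (1/2) t (1/10) * S (1/10) t (z + 1/2)) + zeta^4 * (S (1/2) t (3/10) * S (1/10) t (z + 7/10)) * (S (1/2) t (3/10) * S (1/10) t (z + 9/10)) - (S (1/2) t (1/10) * S (1/10) t (z + 3/10)) * (S (1/2) t (3/10) * S (1/10) t (z + 3/10))" by algebra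
    also have "\<dots> = 0" unfolding pr1 pr2 pr4 pr7 pr8 pr9 using zeta5 by algebra
    finally show ?thesis .
  qed
  have I5: "(S (1/2) t (1/10))^2 * (S (1/10) t (z + 1/10)) * (S (1/10) t (z + 7/10)) - (S (1/2) t (3/10))^2 * (S (1/10) t (z + 3/10)) * (S (1/10) t (z + 1/2)) + zeta^4 * (S (1/2) t (1/10)) * (S (1/2) t (3/10)) * ((S (1/10) t (z + 9/10)))^2 = 0"
  proof -
    have "(S (1/2) t (1/10))^2 * (S (1/10) t (z + 1/10)) * (S (1/10) t (z + 7/10)) - (S (1/2) t (3/10))^2 * (S (1/10) t (z + 3/10)) * (S (1/10) t (z + 1/2)) + zeta^4 * (S (1/2) t (1/10)) * (S (1/2) t (3/10)) * ((S (1/10) t (z + 9/10)))^2 = (S (1/2) t (1/10) * S (1/10) t (z + 1/10)) * (S (1/2) t (1/10) * S (1/10) t (z + 7/10)) - (S (1/2) t (3/10) * S (1/10) t (z + 3/10)) * (S (1/2) t (3/10) * S (1/10) t (z + 1/2)) + zeta^4 * (S (1/2) t (1/10) * S (1/10) t (z + 9/10)) * (S (1/2) t (3/10) * S (1/10) t (z + 9/10))" by algebra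
    also have "\<dots> = 0" unfolding pr1 pr3 pr5 pr6 pr8 pr9 using zeta5 by algebra
    finally show ?thesis .
  qed

  show ?thesis using I1 I2 I3 I4 I5 by blast
qed


theorem proposition6p3:
  fixes z t :: complex
  assumes "Im t > 0"
  defines "w \<equiv> exp (2 * pi * \<i> / 5)"
    and "A \<equiv> theta_const 1 (1/5) t"
    and "B \<equiv> theta_const 1 (3/5) t"
    and "f \<equiv> (\<lambda>k::nat. theta_char (1/5) (real k / 5) z t)"
  shows "B^2 * f 1 * f 9 - A^2 * f 3 * f 7 + A * B * (f 5)^2 = 0 \<and>
         w^2 * A^2 * f 3 * f 9 - w^2 * B^2 * f 5 * f 7 + A * B * (f 1)^2 = 0 \<and>
         B^2 * f 1 * f 3 + w^2 * A^2 * f 5 * f 9 - w^2 * A * B * (f 7)^2 = 0 \<and>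
         A^2 * f 1 * f 5 + w^2 * B^2 * f 7 * f 9 - A * B * (f 3)^2 = 0 \<and>
         A^2 * f 1 * f 7 - B^2 * f 3 * f 5 + w^2 * A * B * (f 9)^2 = 0"
proof -
  have Aeq: "A = S (1/2) t (1/10)" unfolding A_def theta_const_def theta_S by simp
  have Beq: "B = S (1/2) t (3/10)" unfolding B_def theta_const_def theta_S by simp
  have f1: "f 1 = S (1/10) t (z + 1/10)" unfolding f_def theta_S by simp
  have f3: "f 3 = S (1/10) t (z + 3/10)" unfolding f_def theta_S by simp
  have f5: "f 5 = S (1/10) t (z + 1/2)" unfolding f_def theta_S by simp
  have f7: "f 7 = S (1/10) t (z + 7/10)" unfolding f_def theta_S by simp
  have f9: "f 9 = S (1/10) t (z + 9/10)" unfolding f_def theta_S by simp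
  have w2: "w^2 = zeta^4" unfolding w_def w_zeta by (simp flip: power_mult)
  show ?thesis unfolding Aeq Beq f1 f3 f5 f7 f9 w2
    using main_identities[OF assms(1), of z] by simp
qed

end
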